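(* If a countably infinite oligomorphic structure $\mathbb{A}$ has the finite length property over a field $\mathbb{F}$, then every structure $\mathbb{B}$ that is first-order interpretable in $\mathbb{A}$ is oligomorphic and has the finite length property over $\mathbb{F}$.
   Context: Oligomorphic: the automorphism group has finitely many orbits on each finite power. An orbit-finite set over $\mathbb{A}$ is obtained from some $\mathbb{A}^d$ by restricting to an $\operatorname{Aut}(\mathbb{A})$-invariant subset and quotienting by an $\operatorname{Aut}(\mathbb{A})$-invariant equivalence relation, with the induced action. A $\sigma'$-structure $\mathbb{B}$ (relational vocabulary $\sigma'$) is first-order interpretable in $\mathbb{A}$ if it is isomorphic to a structure whose underlying set is an orbit-finite set $X$ over $\mathbb{A}$ and in which each $d$-ary $R\in\sigma'$ is interpreted by an $\operatorname{Aut}(\mathbb{A})$-invariant subset of $X^d$. Finite length property over $\mathbb{F}$ for a structure $\mathbb{M}$: for every orbit-finite set $Y$ over $\mathbb{M}$, there is a finite bound on the lengths $n$ of chains $V_0\subsetneq\dots\subsetneq V_n$ of $\operatorname{Aut}(\mathbb{M})$-invariant subspaces of $\operatorname{Lin}_{\mathbb{F}}Y$ (finite formal linear combinations of elements of $Y$). *)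

theory Defs
  imports Main "HOL-Library.Countable_Set"
begin

text \<open>A relational structure is given by a universe D :: 'a set and an interpretation
  R :: 's => 'a list set of the relation symbols (tuples as lists), with arities ar.\<close>

definition wf_struct :: "'a set \<Rightarrow> ('s \<Rightarrow> 'a list set) \<Rightarrow> ('s \<Rightarrow> nat) \<Rightarrow> bool" where
  "wf_struct D R ar \<longleftrightarrow> (\<forall>s. R s \<subseteq> {xs. set xs \<subseteq> D \<and> length xs = ar s})"

definition Aut :: "'a set \<Rightarrow> ('s \<Rightarrow> 'a list set) \<Rightarrow> ('a \<Rightarrow> 'a) set" where
  "Aut D R = {f. bij_betw f D D \<and> (\<forall>x. x \<notin> D \<longrightarrow> f x = x) \<and>
      (\<forall>s xs. set xs \<subseteq> D \<longrightarrow> (xs \<in> R s \<longleftrightarrow> map f xs \<in> R s))}"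

definition tuples :: "'a set \<Rightarrow> nat \<Rightarrow> 'a list set" where
  "tuples D n = {xs. set xs \<subseteq> D \<and> length xs = n}"

definition orbits :: "'a set \<Rightarrow> ('s \<Rightarrow> 'a list set) \<Rightarrow> nat \<Rightarrow> 'a list set set" where
  "orbits D R n = {{map f xs | f. f \<in> Aut D R} | xs. xs \<in> tuples D n}"

definition oligomorphic :: "'a set \<Rightarrow> ('s \<Rightarrow> 'a list set) \<Rightarrow> bool" where
  "oligomorphic D R \<longleftrightarrow> (\<forall>n. finite (orbits D R n))"

text \<open>Orbit-finite set data: an Aut-invariant subset S of D^d together with an
  Aut-invariant equivalence relation E on S; the orbit-finite set is S // E, with the
  induced action act f.\<close>
definition orbit_finite_data ::
  "'a set \<Rightarrow> ('s \<Rightarrow> 'a list set) \<Rightarrow> nat \<Rightarrow> 'a list set \<Rightarrow> 'a list rel \<Rightarrow> bool" where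
  "orbit_finite_data D R d S E \<longleftrightarrow> S \<subseteq> tuples D d \<and> equiv S E \<and>
     (\<forall>f\<in>Aut D R. \<forall>xs\<in>S. map f xs \<in> S) \<and>
     (\<forall>f\<in>Aut D R. \<forall>xs ys. (xs, ys) \<in> E \<longrightarrow> (map f xs, map f ys) \<in> E)"

definition act :: "('a \<Rightarrow> 'a) \<Rightarrow> 'a list set \<Rightarrow> 'a list set" where
  "act f C = map f ` C"

text \<open>Lin_F Y: finite formal linear combinations = finitely supported functions Y -> F.\<close>
definition lin_space :: "'y set \<Rightarrow> ('y \<Rightarrow> 'f::field) set" where
  "lin_space Y = {v. finite {y. v y \<noteq> 0} \<and> {y. v y \<noteq> 0} \<subseteq> Y}"

definition lin_subspace :: "'y set \<Rightarrow> ('y \<Rightarrow> 'f::field) set \<Rightarrow> bool" where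
  "lin_subspace Y V \<longleftrightarrow> V \<subseteq> lin_space Y \<and> (\<lambda>_. 0) \<in> V \<and>
     (\<forall>v\<in>V. \<forall>w\<in>V. (\<lambda>y. v y + w y) \<in> V) \<and> (\<forall>c. \<forall>v\<in>V. (\<lambda>y. c * v y) \<in> V)"

text \<open>Invariance under the induced action of Aut on Lin_F (S//E) (Aut is a group, so
  closure under v |-> v o act f for all f is the same as closure under the action).\<close>
definition inv_subspace ::
  "'a set \<Rightarrow> ('s \<Rightarrow> 'a list set) \<Rightarrow> 'a list set set \<Rightarrow> ('a list set \<Rightarrow> 'f::field) set \<Rightarrow> bool" where
  "inv_subspace D R Y V \<longleftrightarrow> lin_subspace Y V \<and>
     (\<forall>f\<in>Aut D R. \<forall>v\<in>V. (\<lambda>C. if C \<in> Y then v (act f C) else 0) \<in> V)"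

definition finite_length_property ::
  "'a set \<Rightarrow> ('s \<Rightarrow> 'a list set) \<Rightarrow> 'f::field itself \<Rightarrow> bool" where
  "finite_length_property D R (F :: 'f itself) \<longleftrightarrow>
     (\<forall>d S E. orbit_finite_data D R d S E \<longrightarrow>
        (\<exists>N::nat. \<forall>(n::nat) (V :: nat \<Rightarrow> ('a list set \<Rightarrow> 'f) set).
           (\<forall>i\<le>n. inv_subspace D R (S // E) (V i)) \<and> (\<forall>i<n. V i \<subset> V (Suc i))
           \<longrightarrow> n \<le> N))"

text \<open>B = (DB, RB) is first-order interpretable in A = (D, R): B is isomorphic (via h) to a
  structure on an orbit-finite set S//E over A whose relations Q t are Aut(A)-invariant
  subsets of (S//E)^(arB t).\<close>
definition fo_interpretable ::
  "'a set \<Rightarrow> ('s \<Rightarrow> 'a list set) \<Rightarrow> 'b set \<Rightarrow> ('t \<Rightarrow> 'b list set) \<Rightarrow> ('t \<Rightarrow> nat) \<Rightarrow> bool" where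
  "fo_interpretable D R DB RB arB \<longleftrightarrow>
     (\<exists>d S E (Q :: 't \<Rightarrow> 'a list set list set) (h :: 'b \<Rightarrow> 'a list set).
        orbit_finite_data D R d S E \<and>
        (\<forall>t. Q t \<subseteq> tuples (S // E) (arB t)) \<and>
        (\<forall>t. \<forall>f\<in>Aut D R. \<forall>cs\<in>Q t. map (act f) cs \<in> Q t) \<and>
        bij_betw h DB (S // E) \<and>
        (\<forall>t bs. set bs \<subseteq> DB \<longrightarrow> (bs \<in> RB t \<longleftrightarrow> map h bs \<in> Q t)))"

end

theory Submission
  imports Defs
begin

lemma Aut_bij: assumes "f \<in> Aut D R" shows "bij f"
proof -
  have b: "bij_betw f D D" and o: "\<And>x. x \<notin> D \<Longrightarrow> f x = x" using assms by (auto simp: Aut_def)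
  have "inj f"
  proof (rule injI)
    fix x y assume e: "f x = f y"
    show "x = y"
    proof (cases "x \<in> D"; cases "y \<in> D")
      assume "x \<in> D" "y \<in> D" thus ?thesis using b e by (metis bij_betw_def inj_onD)
    next
      assume "x \<in> D" "y \<notin> D" thus ?thesis using b e o by (metis bij_betwE)
    next
      assume "x \<notin> D" "y \<in> D" thus ?thesis using b e o by (metis bij_betwE)
    next
      assume "x \<notin> D" "y \<notin> D" thus ?thesis using e o by metis
    qed
  qed
  moreover have "surj f"
  proof -
    { fix y have "y \<in> range f"
      proof (cases "y \<in> D")
        case True thus ?thesis using b by (metis bij_betw_imp_surj_on rangeI image_iff)
      next
        case False thus ?thesis using o by (metis rangeI)
      qed }
    thus ?thesis by auto
  qed
  ultimately show ?thesis by (simp add: bij_def)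
qed

lemma Aut_img: "f \<in> Aut D R \<Longrightarrow> x \<in> D \<Longrightarrow> f x \<in> D"
  by (auto simp: Aut_def dest: bij_betwE)

lemma Aut_map: "f \<in> Aut D R \<Longrightarrow> set xs \<subseteq> D \<Longrightarrow> set (map f xs) \<subseteq> D"
  using Aut_img by fastforce

lemma Aut_inv: assumes "f \<in> Aut D R" shows "inv f \<in> Aut D R"
proof -
  have bf: "bij f" using Aut_bij[OF assms] .
  have b: "bij_betw f D D" and o: "\<And>x. x \<notin> D \<Longrightarrow> f x = x"
    and r: "\<And>s xs. set xs \<subseteq> D \<Longrightarrow> (xs \<in> R s \<longleftrightarrow> map f xs \<in> R s)" using assms by (auto simp: Aut_def)
  have fi: "\<And>x. f (inv f x) = x" using bf by (simp add: bij_is_surj surj_f_inv_f)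
  have if_: "\<And>x. inv f (f x) = x" using bf by (simp add: bij_is_inj)
  have o2: "\<And>x. x \<notin> D \<Longrightarrow> inv f x = x" using o if_ by metis
  have ind: "\<And>x. x \<in> D \<Longrightarrow> inv f x \<in> D" using o2 fi o by metis
  have "bij_betw (inv f) D D"
    by (metis b bf bij_betw_def bij_betw_subset bij_imp_bij_inv image_inv_f_f subset_UNIV bij_is_inj)
  moreover have "set xs \<subseteq> D \<Longrightarrow> (xs \<in> R s \<longleftrightarrow> map (inv f) xs \<in> R s)" for s xs
  proof -
    assume xs: "set xs \<subseteq> D"
    have "set (map (inv f) xs) \<subseteq> D" using xs ind by auto
    hence "map (inv f) xs \<in> R s \<longleftrightarrow> map f (map (inv f) xs) \<in> R s" using r by blast
    moreover have "map f (map (inv f) xs) = xs" by (simp add: fi map_idI)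
    ultimately show ?thesis by simp
  qed
  ultimately show ?thesis using o2 by (auto simp: Aut_def)
qed

lemma Aut_comp: assumes "f \<in> Aut D R" "g \<in> Aut D R" shows "f \<circ> g \<in> Aut D R"
  using assms unfolding Aut_def
  apply (auto intro: bij_betw_trans)
   apply (metis Aut_map assms(2) map_map)
  by (metis Aut_map assms(2) map_map)

lemma Aut_id: "id \<in> Aut D R"
  by (auto simp: Aut_def)

lemma inv_map_map: "f \<in> Aut D R \<Longrightarrow> map (inv f) (map f xs) = xs"
proof -
  assume "f \<in> Aut D R" hence "inj f" using Aut_bij bij_is_inj by blast
  hence "inv f \<circ> f = id" by (simp add: inv_o_cancel)
  thus ?thesis by simp
qed
lemma map_map_inv: "f \<in> Aut D R \<Longrightarrow> map f (map (inv f) xs) = xs"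
proof -
  assume "f \<in> Aut D R" hence "surj f" using Aut_bij bij_is_surj by blast
  hence "f \<circ> inv f = id" by (simp add: surj_iff)
  thus ?thesis by simp
qed

lemma inv_comp_Aut: "f \<in> Aut D R \<Longrightarrow> inv f \<circ> f = id"
  by (metis Aut_bij bij_is_inj inv_o_cancel)
lemma comp_inv_Aut: "f \<in> Aut D R \<Longrightarrow> f \<circ> inv f = id"
  by (metis Aut_bij bij_is_surj surj_iff)

definition chunks :: "nat \<Rightarrow> nat \<Rightarrow> 'x list \<Rightarrow> 'x list list" where
  "chunks d n xs = map (\<lambda>i. take d (drop (i*d) xs)) [0..<n]"

lemma chunks_map: "chunks d n (map f xs) = map (map f) (chunks d n xs)"
  by (simp add: chunks_def take_map drop_map)

lemma take_drop_concat: "(\<forall>ys\<in>set yss. length ys = d) \<Longrightarrow> i < length yss \<Longrightarrow>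
   take d (drop (i*d) (concat yss)) = yss ! i"
proof (induction yss arbitrary: i)
  case Nil thus ?case by simp
next
  case (Cons y yss) thus ?case by (cases i) (auto simp: drop_append add.commute)
qed

lemma chunks_concat: "(\<forall>ys\<in>set yss. length ys = d) \<Longrightarrow> chunks d (length yss) (concat yss) = yss"
  unfolding chunks_def by (rule nth_equalityI) (simp_all add: take_drop_concat)

lemma length_concat_const: "(\<forall>ys\<in>set yss. length ys = d) \<Longrightarrow> length (concat yss) = length yss * d"
  by (induction yss) auto

lemma chunks_tuples: assumes "xs \<in> tuples D (n*d)" "c \<in> set (chunks d n xs)" shows "c \<in> tuples D d"
proof -
  obtain i where i: "i < n" "c = take d (drop (i*d) xs)" using assms(2) by (auto simp: chunks_def)
  have "length xs = n*d" using assms(1) by (simp add: tuples_def)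
  moreover have "i*d + d \<le> n*d" using i(1)
  proof -
    have "Suc i * d \<le> n * d" using i(1) by (intro mult_le_mono1) simp
    thus ?thesis by simp
  qed
  ultimately have "length c = d" using i by auto
  moreover have "set c \<subseteq> D" using assms(1) i(2) unfolding tuples_def
  proof -
    have "set c \<subseteq> set xs" using i(2) set_take_subset set_drop_subset by (metis subset_trans)
    thus ?thesis using assms(1) unfolding tuples_def by auto
  qed
  ultimately show ?thesis by (simp add: tuples_def)
qed

lemma act_class:
  assumes ofd: "orbit_finite_data D R d S E" and f: "f \<in> Aut D R" and xs: "xs \<in> S"
  shows "act f (E``{xs}) = E``{map f xs}"
proof
  have Ei: "\<And>f xs ys. f \<in> Aut D R \<Longrightarrow> (xs, ys) \<in> E \<Longrightarrow> (map f xs, map f ys) \<in> E"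
    using ofd by (auto simp: orbit_finite_data_def)
  show "act f (E``{xs}) \<subseteq> E``{map f xs}" using Ei[OF f] by (auto simp: act_def)
  show "E``{map f xs} \<subseteq> act f (E``{xs})"
  proof
    fix zs assume "zs \<in> E``{map f xs}"
    hence "(map f xs, zs) \<in> E" by simp
    from Ei[OF Aut_inv[OF f] this] have "(xs, map (inv f) zs) \<in> E"
      using inv_map_map[OF f] by simp
    moreover have "zs = map f (map (inv f) zs)" using map_map_inv[OF f] by simp
    ultimately show "zs \<in> act f (E``{xs})" unfolding act_def by (metis ImageI image_eqI singletonI)
  qed
qed

lemma act_quot:
  assumes ofd: "orbit_finite_data D R d S E" and f: "f \<in> Aut D R" and C: "C \<in> S//E"
  shows "act f C \<in> S//E"
proof -
  obtain xs where "xs \<in> S" "C = E``{xs}" using C by (auto elim: quotientE)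
  moreover have "map f xs \<in> S" using ofd f \<open>xs \<in> S\<close> by (auto simp: orbit_finite_data_def)
  ultimately show ?thesis using act_class[OF ofd f] by (simp add: quotientI)
qed

lemma act_inv_act: "f \<in> Aut D R \<Longrightarrow> act (inv f) (act f C) = C"
  unfolding act_def image_image by (simp only: inv_map_map image_ident)
lemma act_act_inv: "f \<in> Aut D R \<Longrightarrow> act f (act (inv f) C) = C"
  unfolding act_def image_image by (simp only: map_map_inv image_ident)

lemma act_bij:
  assumes ofd: "orbit_finite_data D R d S E" and f: "f \<in> Aut D R"
  shows "bij_betw (act f) (S//E) (S//E)"
  apply (rule bij_betw_byWitness[where f'="act (inv f)"])
     apply (simp add: act_inv_act[OF f])
    apply (simp add: act_act_inv[OF f])
   apply (simp add: act_quot[OF ofd f] image_subset_iff)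
  apply (simp add: act_quot[OF ofd Aut_inv[OF f]] image_subset_iff)
  done

lemma orbit_shift:
  assumes g: "g \<in> Aut D R" and bs: "set bs \<subseteq> D"
  shows "{map k (map g bs) | k. k \<in> Aut D R} = {map k bs | k. k \<in> Aut D R}"
proof
  show "{map k (map g bs) | k. k \<in> Aut D R} \<subseteq> {map k bs | k. k \<in> Aut D R}"
  proof
    fix x assume "x \<in> {map k (map g bs) | k. k \<in> Aut D R}"
    then obtain k where k: "k \<in> Aut D R" "x = map k (map g bs)" by blast
    hence "x = map (k \<circ> g) bs" by simp
    thus "x \<in> {map k bs | k. k \<in> Aut D R}" using Aut_comp[OF k(1) g] by blast
  qed
  show "{map k bs | k. k \<in> Aut D R} \<subseteq> {map k (map g bs) | k. k \<in> Aut D R}"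
  proof
    fix x assume "x \<in> {map k bs | k. k \<in> Aut D R}"
    then obtain k where k: "k \<in> Aut D R" "x = map k bs" by blast
    have "map (k \<circ> inv g) (map g bs) = map k (map (inv g) (map g bs))" by simp
    also have "\<dots> = x" using inv_map_map[OF g] k by metis
    finally show "x \<in> {map k (map g bs) | k. k \<in> Aut D R}"
      using Aut_comp[OF k(1) Aut_inv[OF g]] by blast
  qed
qed


locale interp =
  fixes D :: "'a set" and R :: "'s \<Rightarrow> 'a list set"
    and DB :: "'b set" and RB :: "'t \<Rightarrow> 'b list set"
    and d :: nat and S :: "'a list set" and E :: "'a list rel"
    and Q :: "'t \<Rightarrow> 'a list set list set" and h :: "'b \<Rightarrow> 'a list set"
  assumes ofd: "orbit_finite_data D R d S E"
    and Qinv: "\<forall>t. \<forall>f\<in>Aut D R. \<forall>cs\<in>Q t. map (act f) cs \<in> Q t"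
    and hb: "bij_betw h DB (S // E)"
    and hR: "\<forall>t bs. set bs \<subseteq> DB \<longrightarrow> (bs \<in> RB t \<longleftrightarrow> map h bs \<in> Q t)"
begin

definition hi where "hi = inv_into DB h"
definition ind where "ind f = (\<lambda>b. if b \<in> DB then hi (act f (h b)) else b)"

lemma h_hi: "C \<in> S//E \<Longrightarrow> h (hi C) = C"
  unfolding hi_def using hb by (meson bij_betw_inv_into_right)
lemma hi_in: "C \<in> S//E \<Longrightarrow> hi C \<in> DB"
  unfolding hi_def using hb by (metis bij_betw_def inv_into_into)
lemma hi_h: "b \<in> DB \<Longrightarrow> hi (h b) = b"
  unfolding hi_def using hb by (meson bij_betw_inv_into_left)
lemma h_in: "b \<in> DB \<Longrightarrow> h b \<in> S//E"
  using hb by (meson bij_betwE)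

lemma h_ind: "f \<in> Aut D R \<Longrightarrow> b \<in> DB \<Longrightarrow> h (ind f b) = act f (h b)"
  unfolding ind_def using h_hi act_quot[OF ofd] h_in by simp

lemma ind_in: "f \<in> Aut D R \<Longrightarrow> b \<in> DB \<Longrightarrow> ind f b \<in> DB"
  unfolding ind_def using hi_in act_quot[OF ofd] h_in by simp

lemma map_h_ind: "f \<in> Aut D R \<Longrightarrow> set bs \<subseteq> DB \<Longrightarrow> map h (map (ind f) bs) = map (act f) (map h bs)"
  using h_ind by (induction bs) auto

lemma ind_Aut: assumes f: "f \<in> Aut D R" shows "ind f \<in> Aut DB RB"
proof -
  have "bij_betw (hi \<circ> act f \<circ> h) DB DB"
  proof -
    have "bij_betw hi (S // E) DB" unfolding hi_def using hb by (rule bij_betw_inv_into)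
    thus ?thesis using bij_betw_trans[OF hb bij_betw_trans[OF act_bij[OF ofd f]]] by blast
  qed
  moreover have "\<And>b. b \<in> DB \<Longrightarrow> (hi \<circ> act f \<circ> h) b = ind f b" by (simp add: ind_def)
  ultimately have b: "bij_betw (ind f) DB DB" using bij_betw_cong by blast
  have r: "bs \<in> RB t \<longleftrightarrow> map (ind f) bs \<in> RB t" if bs: "set bs \<subseteq> DB" for t bs
  proof -
    have s2: "set (map (ind f) bs) \<subseteq> DB" using bs ind_in[OF f] by auto
    have "map (ind f) bs \<in> RB t \<longleftrightarrow> map h (map (ind f) bs) \<in> Q t" using hR s2 by blast
    also have "\<dots> \<longleftrightarrow> map (act f) (map h bs) \<in> Q t" unfolding map_h_ind[OF f bs] ..
    also have "\<dots> \<longleftrightarrow> map h bs \<in> Q t"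
    proof
      assume "map (act f) (map h bs) \<in> Q t"
      hence "map (act (inv f)) (map (act f) (map h bs)) \<in> Q t" using Qinv Aut_inv[OF f] by blast
      moreover have "map (act (inv f)) (map (act f) (map h bs)) = map h bs"
        by (simp add: act_inv_act[OF f])
      ultimately show "map h bs \<in> Q t" by metis
    next
      assume "map h bs \<in> Q t" thus "map (act f) (map h bs) \<in> Q t" using Qinv f by blast
    qed
    also have "\<dots> \<longleftrightarrow> bs \<in> RB t" using hR bs by blast
    finally show ?thesis by simp
  qed
  show ?thesis unfolding Aut_def using b r by (auto simp: ind_def)
qed

definition rho :: "nat \<Rightarrow> 'a list \<Rightarrow> 'b list" where
  "rho n xs = map (\<lambda>c. hi (E``{c})) (chunks d n xs)"

definition goodc :: "nat \<Rightarrow> 'a list \<Rightarrow> bool" where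
  "goodc n xs \<longleftrightarrow> xs \<in> tuples D (n*d) \<and> (\<forall>c\<in>set (chunks d n xs). c \<in> S)"

lemma S_tuples: "S \<subseteq> tuples D d" using ofd by (simp add: orbit_finite_data_def)
lemma S_inv: "f \<in> Aut D R \<Longrightarrow> xs \<in> S \<Longrightarrow> map f xs \<in> S" using ofd by (simp add: orbit_finite_data_def)

lemma rho_surj: assumes bs: "bs \<in> tuples DB n" shows "\<exists>xs. goodc n xs \<and> rho n xs = bs"
proof -
  have "\<forall>b\<in>DB. \<exists>r. r \<in> S \<and> E``{r} = h b" using h_in by (metis quotientE)
  then obtain r where r: "\<And>b. b \<in> DB \<Longrightarrow> r b \<in> S \<and> E``{r b} = h b" by metis
  define yss where "yss = map r bs"
  have bsD: "set bs \<subseteq> DB" "length bs = n" using bs by (auto simp: tuples_def)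
  have yS: "\<forall>ys\<in>set yss. ys \<in> S" using r bsD by (auto simp: yss_def)
  hence yl: "\<forall>ys\<in>set yss. length ys = d" using S_tuples by (auto simp: tuples_def)
  have ch: "chunks d n (concat yss) = yss" using chunks_concat[OF yl] bsD by (simp add: yss_def)
  have "concat yss \<in> tuples D (n*d)"
    using length_concat_const[OF yl] bsD yS S_tuples by (auto simp: tuples_def yss_def)
  moreover have "rho n (concat yss) = bs"
  proof -
    have "rho n (concat yss) = map (\<lambda>c. hi (E``{c})) yss" by (simp add: rho_def ch)
    also have "\<dots> = map (\<lambda>b. hi (E``{r b})) bs" by (simp add: yss_def)
    also have "\<dots> = bs" using r bsD hi_h by (intro map_idI) auto
    finally show ?thesis .
  qed
  ultimately show ?thesis using ch yS unfolding goodc_def by metis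
qed

lemma rho_map: assumes f: "f \<in> Aut D R" and g: "goodc n xs"
  shows "goodc n (map f xs) \<and> rho n (map f xs) = map (ind f) (rho n xs)"
proof
  have xs: "xs \<in> tuples D (n*d)" and cs: "\<forall>c\<in>set (chunks d n xs). c \<in> S" using g by (auto simp: goodc_def)
  show "goodc n (map f xs)" using xs cs Aut_map[OF f] S_inv[OF f]
    by (auto simp: goodc_def chunks_map tuples_def)
  have "\<And>c. c \<in> S \<Longrightarrow> hi (E``{map f c}) = ind f (hi (E``{c}))"
  proof -
    fix c assume c: "c \<in> S"
    have q: "E``{c} \<in> S//E" using c by (rule quotientI)
    show "hi (E``{map f c}) = ind f (hi (E``{c}))"
      unfolding ind_def using hi_in[OF q] h_hi[OF q] act_class[OF ofd f c] by simp
  qed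
  thus "rho n (map f xs) = map (ind f) (rho n xs)" using cs by (simp add: rho_def chunks_map)
qed

lemma rho_tuples: "goodc n xs \<Longrightarrow> rho n xs \<in> tuples DB n"
  unfolding goodc_def rho_def tuples_def chunks_def
  by (auto intro!: hi_in quotientI simp: chunks_def)

end

definition Tm :: "('y2 \<Rightarrow> 'y1) \<Rightarrow> 'y2 set \<Rightarrow> ('y1 \<Rightarrow> 'f::field) \<Rightarrow> ('y2 \<Rightarrow> 'f)" where
  "Tm \<phi> Y2 v = (\<lambda>C. if C \<in> Y2 then v (\<phi> C) else 0)"

lemma Tm_lin_space:
  assumes b: "bij_betw \<phi> Y2 Y1" and v: "v \<in> lin_space Y1"
  shows "Tm \<phi> Y2 v \<in> lin_space Y2"
proof -
  have "{C. Tm \<phi> Y2 v C \<noteq> 0} = \<phi> -` {y. v y \<noteq> 0} \<inter> Y2" by (auto simp: Tm_def split: if_splits)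
  moreover have "finite {y. v y \<noteq> 0}" using v by (simp add: lin_space_def)
  ultimately have "finite {C. Tm \<phi> Y2 v C \<noteq> 0}"
    using finite_vimage_IntI b by (metis bij_betw_def)
  moreover have "{C. Tm \<phi> Y2 v C \<noteq> 0} \<subseteq> Y2" by (auto simp: Tm_def split: if_splits)
  ultimately show ?thesis by (simp add: lin_space_def)
qed

lemma Tm_lin:
  assumes b: "bij_betw \<phi> Y2 Y1" and V: "lin_subspace Y1 V"
  shows "lin_subspace Y2 (Tm \<phi> Y2 ` V)"
proof -
  have V1: "V \<subseteq> lin_space Y1" and V2: "(\<lambda>_. 0) \<in> V"
    and V3: "\<forall>v\<in>V. \<forall>w\<in>V. (\<lambda>y. v y + w y) \<in> V" and V4: "\<forall>c. \<forall>v\<in>V. (\<lambda>y. c * v y) \<in> V"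
    using V by (auto simp: lin_subspace_def)
  have "Tm \<phi> Y2 ` V \<subseteq> lin_space Y2" using Tm_lin_space[OF b] V1 by blast
  moreover have "(\<lambda>_. 0) \<in> Tm \<phi> Y2 ` V"
  proof
    show "(\<lambda>_. 0) = Tm \<phi> Y2 (\<lambda>_. 0)" by (simp add: Tm_def)
  qed (rule V2)
  moreover have "\<forall>v\<in>Tm \<phi> Y2 ` V. \<forall>w\<in>Tm \<phi> Y2 ` V. (\<lambda>y. v y + w y) \<in> Tm \<phi> Y2 ` V"
  proof (intro ballI)
    fix v w assume "v \<in> Tm \<phi> Y2 ` V" "w \<in> Tm \<phi> Y2 ` V"
    then obtain v' w' where "v' \<in> V" "w' \<in> V" "v = Tm \<phi> Y2 v'" "w = Tm \<phi> Y2 w'" by blast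
    moreover have "(\<lambda>y. Tm \<phi> Y2 v' y + Tm \<phi> Y2 w' y) = Tm \<phi> Y2 (\<lambda>y. v' y + w' y)"
      by (auto simp: Tm_def)
    ultimately show "(\<lambda>y. v y + w y) \<in> Tm \<phi> Y2 ` V" using V3 by auto
  qed
  moreover have "\<forall>c. \<forall>v\<in>Tm \<phi> Y2 ` V. (\<lambda>y. c * v y) \<in> Tm \<phi> Y2 ` V"
  proof (intro allI ballI)
    fix c v assume "v \<in> Tm \<phi> Y2 ` V"
    then obtain v' where "v' \<in> V" "v = Tm \<phi> Y2 v'" by blast
    moreover have "(\<lambda>y. c * Tm \<phi> Y2 v' y) = Tm \<phi> Y2 (\<lambda>y. c * v' y)"
      by (auto simp: Tm_def)
    ultimately show "(\<lambda>y. c * v y) \<in> Tm \<phi> Y2 ` V" using V4 by auto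
  qed
  ultimately show ?thesis by (simp add: lin_subspace_def)
qed

lemma Tm_inj:
  assumes b: "bij_betw \<phi> Y2 Y1"
  shows "inj_on (Tm \<phi> Y2) (lin_space Y1)"
proof (rule inj_onI)
  fix v w assume v: "v \<in> lin_space Y1" and w: "w \<in> lin_space Y1" and e: "Tm \<phi> Y2 v = Tm \<phi> Y2 w"
  show "v = w"
  proof
    fix y show "v y = w y"
    proof (cases "y \<in> Y1")
      case True
      then obtain C where C: "C \<in> Y2" "y = \<phi> C" using b by (metis bij_betw_imp_surj_on imageE)
      have "Tm \<phi> Y2 v C = Tm \<phi> Y2 w C" using e by simp
      thus ?thesis using C by (simp add: Tm_def)
    next
      case False
      hence "v y = 0" "w y = 0" using v w unfolding lin_space_def by blast+
      thus ?thesis by simp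
    qed
  qed
qed


context interp begin

lemma olig: assumes "oligomorphic D R" shows "oligomorphic DB RB"
  unfolding oligomorphic_def
proof
  fix n
  define orbA where "orbA xs = {map f xs | f. f \<in> Aut D R}" for xs
  define orbB where "orbB bs = {map g bs | g. g \<in> Aut DB RB}" for bs
  define \<Phi> where "\<Phi> Oa = orbB (rho n (SOME xs. xs \<in> Oa \<and> goodc n xs))" for Oa
  have "orbits DB RB n \<subseteq> \<Phi> ` orbits D R (n*d)"
  proof
    fix O' assume "O' \<in> orbits DB RB n"
    then obtain bs where bs: "bs \<in> tuples DB n" "O' = orbB bs" by (auto simp: orbits_def orbB_def)
    obtain xs where xs: "goodc n xs" "rho n xs = bs" using rho_surj[OF bs(1)] by blast
    have O: "orbA xs \<in> orbits D R (n*d)" using xs(1) by (auto simp: orbits_def orbA_def goodc_def)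
    have "xs \<in> orbA xs" unfolding orbA_def using Aut_id by (metis (mono_tags, lifting) list.map_id mem_Collect_eq)
    hence "\<exists>x. x \<in> orbA xs \<and> goodc n x" using xs by blast
    hence "(SOME x. x \<in> orbA xs \<and> goodc n x) \<in> orbA xs" by (rule someI2_ex) blast
    then obtain f where f: "f \<in> Aut D R" "(SOME x. x \<in> orbA xs \<and> goodc n x) = map f xs"
      unfolding orbA_def by blast
    have "rho n (map f xs) = map (ind f) bs" using rho_map[OF f(1) xs(1)] xs(2) by simp
    moreover have "set bs \<subseteq> DB" using bs by (simp add: tuples_def)
    ultimately have "\<Phi> (orbA xs) = O'"
      unfolding \<Phi>_def f(2) bs(2) orbB_def using orbit_shift[OF ind_Aut[OF f(1)]] by simp
    thus "O' \<in> \<Phi> ` orbits D R (n*d)" using O by blast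
  qed
  moreover have "finite (orbits D R (n*d))" using assms by (simp add: oligomorphic_def)
  ultimately show "finite (orbits DB RB n)" by (meson finite_surj)
qed

lemma flp: assumes A: "finite_length_property D R (F :: 'f::field itself)"
  shows "finite_length_property DB RB F"
  unfolding finite_length_property_def
proof (intro allI impI)
  fix d' S' E' assume ofdB: "orbit_finite_data DB RB d' S' E'"
  have S'sub: "S' \<subseteq> tuples DB d'" and eqB: "equiv S' E'"
    and S'inv: "\<And>g xs. g \<in> Aut DB RB \<Longrightarrow> xs \<in> S' \<Longrightarrow> map g xs \<in> S'"
    and E'inv: "\<And>g xs ys. g \<in> Aut DB RB \<Longrightarrow> (xs, ys) \<in> E' \<Longrightarrow> (map g xs, map g ys) \<in> E'"
    using ofdB by (auto simp: orbit_finite_data_def)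
  have E'S: "E' \<subseteq> S' \<times> S'" using eqB by (simp add: equiv_def refl_on_def)
  define S2 where "S2 = {xs. goodc d' xs \<and> rho d' xs \<in> S'}"
  define E2 where "E2 = {(xs,ys). xs \<in> S2 \<and> ys \<in> S2 \<and> (rho d' xs, rho d' ys) \<in> E'}"
  have S2map: "map f xs \<in> S2 \<and> rho d' (map f xs) = map (ind f) (rho d' xs)"
    if f: "f \<in> Aut D R" and xs: "xs \<in> S2" for f xs
    using rho_map[OF f] S'inv[OF ind_Aut[OF f]] xs by (auto simp: S2_def)
  have eq2: "equiv S2 E2"
    unfolding equiv_def refl_on_def sym_def trans_def
  proof (intro conjI allI impI ballI)
    show "E2 \<subseteq> S2 \<times> S2" by (auto simp: E2_def)
    fix x assume "x \<in> S2" thus "(x, x) \<in> E2" using eqB by (auto simp: E2_def S2_def equiv_def refl_on_def)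
  next
    fix x y assume "(x, y) \<in> E2" thus "(y, x) \<in> E2" using eqB by (auto simp: E2_def equiv_def sym_def)
  next
    fix x y z assume "(x, y) \<in> E2" "(y, z) \<in> E2" thus "(x, z) \<in> E2"
      using eqB unfolding E2_def equiv_def trans_def by blast
  qed
  have ofd2: "orbit_finite_data D R (d'*d) S2 E2"
    unfolding orbit_finite_data_def
  proof (intro conjI ballI allI impI)
    show "S2 \<subseteq> tuples D (d'*d)" by (auto simp: S2_def goodc_def)
    show "equiv S2 E2" by (rule eq2)
    fix f assume f: "f \<in> Aut D R"
    { fix xs assume "xs \<in> S2" thus "map f xs \<in> S2" using S2map[OF f] by blast }
    { fix xs ys assume "(xs, ys) \<in> E2"
      hence xy: "xs \<in> S2" "ys \<in> S2" "(rho d' xs, rho d' ys) \<in> E'" by (auto simp: E2_def)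
      show "(map f xs, map f ys) \<in> E2"
        using S2map[OF f xy(1)] S2map[OF f xy(2)] E'inv[OF ind_Aut[OF f] xy(3)] by (simp add: E2_def) }
  qed
  have "\<exists>N. \<forall>n (V :: nat \<Rightarrow> ('a list set \<Rightarrow> 'f) set).
      (\<forall>i\<le>n. inv_subspace D R (S2 // E2) (V i)) \<and> (\<forall>i<n. V i \<subset> V (Suc i)) \<longrightarrow> n \<le> N"
    using A[unfolded finite_length_property_def, rule_format, OF ofd2] .
  then obtain N where N: "\<forall>n (V :: nat \<Rightarrow> ('a list set \<Rightarrow> 'f) set).
      (\<forall>i\<le>n. inv_subspace D R (S2 // E2) (V i)) \<and> (\<forall>i<n. V i \<subset> V (Suc i)) \<longrightarrow> n \<le> N"
    by (rule exE)
  define Y1 where "Y1 = S' // E'"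
  define Y2 where "Y2 = S2 // E2"
  define \<phi> where "\<phi> C = E'``{rho d' (SOME xs. xs \<in> C)}" for C
  have phi_class: "\<phi> (E2``{xs}) = E'``{rho d' xs}" if xs: "xs \<in> S2" for xs
  proof -
    have "xs \<in> E2``{xs}" by (rule equiv_class_self[OF eq2 xs])
    define ys where "ys = (SOME ys. ys \<in> E2``{xs})"
    have "ys \<in> E2``{xs}" unfolding ys_def by (rule someI) fact
    hence "(xs, ys) \<in> E2" by simp
    hence "(rho d' xs, rho d' ys) \<in> E'" unfolding E2_def by blast
    hence "E'``{rho d' ys} = E'``{rho d' xs}" using equiv_class_eq[OF eqB] by metis
    thus ?thesis unfolding \<phi>_def ys_def .
  qed
  have bphi: "bij_betw \<phi> Y2 Y1"
    unfolding bij_betw_def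
  proof
    show "inj_on \<phi> Y2"
    proof (rule inj_onI)
      fix C1 C2 assume "C1 \<in> Y2" "C2 \<in> Y2" and e: "\<phi> C1 = \<phi> C2"
      then obtain x y where xy: "x \<in> S2" "y \<in> S2" "C1 = E2``{x}" "C2 = E2``{y}"
        unfolding Y2_def by (metis quotientE)
      have "E'``{rho d' x} = E'``{rho d' y}" using e phi_class xy by simp
      hence "(rho d' x, rho d' y) \<in> E'" using eq_equiv_class[OF _ eqB] xy(2) by (simp add: S2_def)
      hence "(x, y) \<in> E2" using xy by (simp add: E2_def)
      thus "C1 = C2" using xy equiv_class_eq[OF eq2] by simp
    qed
    show "\<phi> ` Y2 = Y1"
    proof
      show "\<phi> ` Y2 \<subseteq> Y1"
      proof
        fix C' assume "C' \<in> \<phi> ` Y2"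
        then obtain x where "x \<in> S2" "C' = \<phi> (E2``{x})" unfolding Y2_def by (metis imageE quotientE)
        thus "C' \<in> Y1" using phi_class unfolding Y1_def by (simp add: S2_def quotientI)
      qed
      show "Y1 \<subseteq> \<phi> ` Y2"
      proof
        fix C' assume "C' \<in> Y1"
        then obtain bs where bs: "bs \<in> S'" "C' = E'``{bs}" unfolding Y1_def by (metis quotientE)
        obtain xs where xs: "goodc d' xs" "rho d' xs = bs" using rho_surj S'sub bs(1) by blast
        have "xs \<in> S2" using xs bs by (simp add: S2_def)
        thus "C' \<in> \<phi> ` Y2" using phi_class xs bs unfolding Y2_def by (metis image_eqI quotientI)
      qed
    qed
  qed
  have equi: "act f C \<in> Y2 \<and> \<phi> (act f C) = act (ind f) (\<phi> C)"
    if f: "f \<in> Aut D R" and C: "C \<in> Y2" for f C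
  proof
    show "act f C \<in> Y2" using act_quot[OF ofd2 f] C by (simp add: Y2_def)
    obtain xs where xs: "xs \<in> S2" "C = E2``{xs}" using C unfolding Y2_def by (metis quotientE)
    have "\<phi> (act f C) = \<phi> (E2``{map f xs})" using act_class[OF ofd2 f xs(1)] xs(2) by simp
    also have "\<dots> = E'``{rho d' (map f xs)}" using phi_class S2map[OF f xs(1)] by blast
    also have "\<dots> = E'``{map (ind f) (rho d' xs)}" using S2map[OF f xs(1)] by simp
    also have "\<dots> = act (ind f) (E'``{rho d' xs})"
      using act_class[OF ofdB ind_Aut[OF f]] xs(1) by (simp add: S2_def)
    also have "\<dots> = act (ind f) (\<phi> C)" using phi_class xs by simp
    finally show "\<phi> (act f C) = act (ind f) (\<phi> C)" .
  qed
  show "\<exists>N. \<forall>n (V :: nat \<Rightarrow> ('b list set \<Rightarrow> 'f) set).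
           (\<forall>i\<le>n. inv_subspace DB RB (S' // E') (V i)) \<and> (\<forall>i<n. V i \<subset> V (Suc i)) \<longrightarrow> n \<le> N"
  proof (intro exI allI impI)
    fix n and V :: "nat \<Rightarrow> ('b list set \<Rightarrow> 'f) set"
    assume ch: "(\<forall>i\<le>n. inv_subspace DB RB (S' // E') (V i)) \<and> (\<forall>i<n. V i \<subset> V (Suc i))"
    define W where "W i = Tm \<phi> Y2 ` V i" for i
    have Vi: "inv_subspace DB RB Y1 (V i)" if "i \<le> n" for i using ch that Y1_def by blast
    have I1: "inv_subspace D R Y2 (W i)" if i: "i \<le> n" for i
      unfolding inv_subspace_def
    proof (intro conjI ballI)
      have lV: "lin_subspace Y1 (V i)" using Vi[OF i] by (simp add: inv_subspace_def)
      show "lin_subspace Y2 (W i)" unfolding W_def by (rule Tm_lin[OF bphi lV])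
      fix f w assume f: "f \<in> Aut D R" and w: "w \<in> W i"
      then obtain v where v: "v \<in> V i" "w = Tm \<phi> Y2 v" unfolding W_def by blast
      define v' where "v' = (\<lambda>C'. if C' \<in> Y1 then v (act (ind f) C') else 0)"
      have "\<forall>g\<in>Aut DB RB. \<forall>v\<in>V i. (\<lambda>C. if C \<in> Y1 then v (act g C) else 0) \<in> V i"
        using Vi[OF i] unfolding inv_subspace_def by (rule conjunct2)
      hence "v' \<in> V i" using ind_Aut[OF f] v(1) unfolding v'_def by blast
      moreover have "(\<lambda>C. if C \<in> Y2 then w (act f C) else 0) = Tm \<phi> Y2 v'"
      proof
        fix C show "(if C \<in> Y2 then w (act f C) else 0) = Tm \<phi> Y2 v' C"
        proof (cases "C \<in> Y2")
          case True
          have "\<phi> C \<in> Y1" using bphi True by (meson bij_betwE)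
          thus ?thesis using True equi[OF f True] v(2) by (simp add: Tm_def v'_def)
        next
          case False thus ?thesis by (simp add: Tm_def)
        qed
      qed
      ultimately show "(\<lambda>C. if C \<in> Y2 then w (act f C) else 0) \<in> W i" unfolding W_def by blast
    qed
    have I2: "W i \<subset> W (Suc i)" if i: "i < n" for i
    proof -
      have "V (Suc i) \<subseteq> lin_space Y1" using Vi[of "Suc i"] i
        by (simp add: inv_subspace_def lin_subspace_def)
      hence "inj_on (Tm \<phi> Y2) (V (Suc i))" using Tm_inj[OF bphi] inj_on_subset by blast
      moreover have "V i \<subset> V (Suc i)" using ch i by blast
      ultimately show ?thesis unfolding W_def by (rule image_strict_mono)
    qed
    have "(\<forall>i\<le>n. inv_subspace D R (S2 // E2) (W i)) \<and> (\<forall>i<n. W i \<subset> W (Suc i))"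
      using I1 I2 unfolding Y2_def by simp
    thus "n \<le> N" by (rule N[rule_format])
  qed
qed

end

theorem mainTheorem17:
  fixes D :: "'a set" and R :: "'s \<Rightarrow> 'a list set" and ar :: "'s \<Rightarrow> nat"
    and DB :: "'b set" and RB :: "'t \<Rightarrow> 'b list set" and arB :: "'t \<Rightarrow> nat"
  assumes "wf_struct D R ar" and "countable D" and "infinite D"
    and "oligomorphic D R"
    and "finite_length_property D R TYPE('f::field)"
    and "wf_struct DB RB arB"
    and "fo_interpretable D R DB RB arB"
  shows "oligomorphic DB RB \<and> finite_length_property DB RB TYPE('f)"
proof -
  obtain d S E and Q :: "'t \<Rightarrow> 'a list set list set" and h :: "'b \<Rightarrow> 'a list set" where
    o: "orbit_finite_data D R d S E"
    and q: "\<forall>t. \<forall>f\<in>Aut D R. \<forall>cs\<in>Q t. map (act f) cs \<in> Q t"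
    and hb: "bij_betw h DB (S // E)"
    and hr: "\<forall>t bs. set bs \<subseteq> DB \<longrightarrow> (bs \<in> RB t \<longleftrightarrow> map h bs \<in> Q t)"
    using assms(7) unfolding fo_interpretable_def by blast
  interpret I: interp D R DB RB d S E Q h
    using o q hb hr by (unfold_locales) auto
  show ?thesis using I.olig[OF assms(4)] I.flp[OF assms(5)] by blast
qed

end
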